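(* Let $F$ be an imaginary CM field. Let $\rho:G_F\to\operatorname{GL}_n(\overline{\mathbb{Q}}_\ell)$ and $\sigma:G_F\to\operatorname{GL}_m(\overline{\mathbb{Q}}_\ell)$ be polarizable, irreducible Galois representations. (1) If $n$ is odd, then $\rho$ is totally odd. (2) If $\rho\otimes\sigma$ is irreducible and two of $\{\rho,\sigma,\rho\otimes\sigma\}$ are totally odd, then all three are totally odd.
   Context: $F$ is a totally imaginary quadratic extension of a totally real field $F^+$, and $\delta_{F/F^+}$ is the quadratic character of $G_{F^+}$ attached to $F/F^+$. For an infinite place $v$ of $F^+$, $c_v\in G_{F^+}$ denotes a complex conjugation associated to $v$. For continuous $r:G_F\to\operatorname{GL}_n(\overline{\mathbb{Q}}_\ell)$ and $\mu:G_{F^+}\to\overline{\mathbb{Q}}_\ell^\times$, the pair $(r,\mu)$ is polarized if for some (equivalently every) infinite place $v$ of $F^+$ there are $\epsilon_v\in\{\pm1\}$ and a non-degenerate pairing $\langle\ ,\ \rangle_v$ on $\overline{\mathbb{Q}}_\ell^n$ with $\langle x,y\rangle_v=\epsilon_v\langle y,x\rangle_v$ and $\langle r(g)x,r(c_vgc_v)y\rangle_v=\mu(g)\langle x,y\rangle_v$ for all $x,y$ and $g\in G_F$, and moreover (after replacing $\mu$ by $\mu\delta_{F/F^+}$ if necessary) $\epsilon_v=-\mu(c_v)$ for all $v$. $r$ is polarizable if such a $\mu$ exists. A polarized $(r,\mu)$ is totally odd if $\epsilon_v=1$ for all $v\mid\infty$; a polarizable irreducible $r$ is called totally odd if it is totally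 odd with respect to its polarization. If $(r,\mu)$ and $(s,\chi)$ are polarized then $(r\otimes s,\mu\chi\delta_{F/F^+})$ is polarized; this is the polarization used for $\rho\otimes\sigma$. *)

theory Defs
  imports "HOL-Analysis.Analysis" "HOL-Computational_Algebra.Polynomial" "HOL-Algebra.Group"
begin

text \<open>G plays the role of G_{F+}; the subset H of its carrier plays the
 role of the index-two subgroup G_F; cc v is a complex conjugation attached to the infinite
 place v of F+.  The coefficient field is an algebraically closed field 'k of characteristic 0
 (standing for the algebraic closure of Q_l).  A representation of H of dimension CARD('n) is a
 map into 'k^'n^'n.\<close>

definition CM_setting :: "('g, 'b) monoid_scheme \<Rightarrow> 'g set \<Rightarrow> ('v \<Rightarrow> 'g) \<Rightarrow> bool" where
  "CM_setting G H cc \<longleftrightarrow> group G \<and> subgroup H G \<and> H \<noteq> carrier G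
     \<and> (\<forall>g\<in>carrier G - H. \<forall>h\<in>carrier G - H. g \<otimes>\<^bsub>G\<^esub> h \<in> H)
     \<and> finite (UNIV :: 'v set)
     \<and> (\<forall>v. cc v \<in> carrier G - H \<and> cc v \<otimes>\<^bsub>G\<^esub> cc v = \<one>\<^bsub>G\<^esub>)"

text \<open>The quadratic character attached to H (i.e. to F/F+).\<close>
definition quad_char :: "'g set \<Rightarrow> 'g \<Rightarrow> 'k::field" where
  "quad_char H g = (if g \<in> H then 1 else - 1)"

definition is_character :: "('g, 'b) monoid_scheme \<Rightarrow> ('g \<Rightarrow> 'k::field) \<Rightarrow> bool" where
  "is_character G \<mu> \<longleftrightarrow> (\<forall>g\<in>carrier G. \<forall>h\<in>carrier G. \<mu> (g \<otimes>\<^bsub>G\<^esub> h) = \<mu> g * \<mu> h)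
     \<and> \<mu> \<one>\<^bsub>G\<^esub> = 1"

definition is_rep :: "('g, 'b) monoid_scheme \<Rightarrow> 'g set \<Rightarrow> ('g \<Rightarrow> 'k::field ^'n^'n) \<Rightarrow> bool" where
  "is_rep G H r \<longleftrightarrow> (\<forall>g\<in>H. \<forall>h\<in>H. r (g \<otimes>\<^bsub>G\<^esub> h) = r g ** r h) \<and> r \<one>\<^bsub>G\<^esub> = mat 1"

definition is_subspace :: "('k::field ^'n) set \<Rightarrow> bool" where
  "is_subspace W \<longleftrightarrow> 0 \<in> W \<and> (\<forall>x\<in>W. \<forall>y\<in>W. x + y \<in> W) \<and> (\<forall>a. \<forall>x\<in>W. a *s x \<in> W)"

definition irreducible_rep :: "('g, 'b) monoid_scheme \<Rightarrow> 'g set \<Rightarrow> ('g \<Rightarrow> 'k::field ^'n^'n) \<Rightarrow> bool" where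
  "irreducible_rep G H r \<longleftrightarrow> is_rep G H r \<and>
     (\<forall>W. is_subspace W \<and> (\<forall>g\<in>H. \<forall>x\<in>W. r g *v x \<in> W) \<longrightarrow> W = {0} \<or> W = UNIV)"

definition pairing :: "'k::field ^'n^'n \<Rightarrow> 'k^'n \<Rightarrow> 'k^'n \<Rightarrow> 'k" where
  "pairing J x y = (\<Sum>i\<in>UNIV. \<Sum>j\<in>UNIV. x $ i * J $ i $ j * y $ j)"

definition nondegenerate :: "'k::field ^'n^'n \<Rightarrow> bool" where
  "nondegenerate J \<longleftrightarrow> (\<forall>x. (\<forall>y. pairing J x y = 0) \<longrightarrow> x = 0)"

definition pol_pairing ::
  "('g, 'b) monoid_scheme \<Rightarrow> 'g set \<Rightarrow> ('v \<Rightarrow> 'g) \<Rightarrow> ('g \<Rightarrow> 'k::field ^'n^'n) \<Rightarrow> ('g \<Rightarrow> 'k)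
    \<Rightarrow> 'v \<Rightarrow> 'k \<Rightarrow> 'k^'n^'n \<Rightarrow> bool" where
  "pol_pairing G H cc r \<mu> v \<epsilon> J \<longleftrightarrow> nondegenerate J
     \<and> (\<forall>x y. pairing J x y = \<epsilon> * pairing J y x)
     \<and> (\<forall>g\<in>H. \<forall>x y. pairing J (r g *v x) (r (cc v \<otimes>\<^bsub>G\<^esub> g \<otimes>\<^bsub>G\<^esub> cc v) *v y)
                     = \<mu> g * pairing J x y)"

definition polarized ::
  "('g, 'b) monoid_scheme \<Rightarrow> 'g set \<Rightarrow> ('v \<Rightarrow> 'g) \<Rightarrow> ('g \<Rightarrow> 'k::field ^'n^'n) \<Rightarrow> ('g \<Rightarrow> 'k) \<Rightarrow> bool" where
  "polarized G H cc r \<mu> \<longleftrightarrow> is_rep G H r \<and> is_character G \<mu> \<and>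
     (\<forall>v. \<exists>\<epsilon> J. (\<epsilon> = 1 \<or> \<epsilon> = -1) \<and> pol_pairing G H cc r \<mu> v \<epsilon> J \<and> \<epsilon> = - \<mu> (cc v))"

definition totally_odd ::
  "('g, 'b) monoid_scheme \<Rightarrow> 'g set \<Rightarrow> ('v \<Rightarrow> 'g) \<Rightarrow> ('g \<Rightarrow> 'k::field ^'n^'n) \<Rightarrow> ('g \<Rightarrow> 'k) \<Rightarrow> bool" where
  "totally_odd G H cc r \<mu> \<longleftrightarrow> polarized G H cc r \<mu> \<and> (\<forall>v. \<exists>J. pol_pairing G H cc r \<mu> v 1 J)"

definition tensor_rep :: "('g \<Rightarrow> 'k::field ^'n^'n) \<Rightarrow> ('g \<Rightarrow> 'k ^'m^'m) \<Rightarrow> 'g \<Rightarrow> 'k ^('n \<times> 'm)^('n \<times> 'm)" where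
  "tensor_rep r s g = (\<chi> p. \<chi> q. r g $ fst p $ fst q * s g $ snd p $ snd q)"

end

theory Submission
  imports Defs
begin


definition dotk :: "'k::field^'n \<Rightarrow> 'k^'n \<Rightarrow> 'k" where
  "dotk u w = (\<Sum>i\<in>UNIV. u$i * w$i)"

lemma pairing_dot: "pairing J x y = dotk x (J *v y)"
  by (simp add: pairing_def dotk_def matrix_vector_mult_def sum_distrib_left mult.assoc)

lemma dotk_mat: "dotk (A *v x) w = dotk x (transpose A *v w)"
proof -
  have "dotk (A *v x) w = (\<Sum>i\<in>UNIV. \<Sum>j\<in>UNIV. A$i$j * x$j * w$i)"
    unfolding dotk_def matrix_vector_mult_def by (simp add: sum_distrib_right)
  also have "\<dots> = (\<Sum>j\<in>UNIV. \<Sum>i\<in>UNIV. A$i$j * x$j * w$i)" by (rule sum.swap)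
  also have "\<dots> = dotk x (transpose A *v w)"
    unfolding dotk_def matrix_vector_mult_def transpose_def by (simp add: sum_distrib_left mult_ac)
  finally show ?thesis .
qed

lemma pairing_mat: "pairing J (A *v x) (B *v y) = pairing (transpose A ** J ** B) x y"
  by (simp add: pairing_dot dotk_mat matrix_vector_mul_assoc matrix_mul_assoc)

lemma if01_mult [simp]: "(if P then 1 else 0) * (a::'k::field) = (if P then a else 0)"
  "a * (if P then 1 else 0) = (if P then a else 0)" by auto

lemma pairing_axis: "pairing J (axis i 1) (axis j 1) = J$i$j"
  unfolding pairing_def by (simp add: axis_def)

lemma pairing_eqI: "(\<And>x y. pairing J x y = pairing K x y) \<Longrightarrow> J = K"
  by (metis pairing_axis vec_eq_iff)

lemma pairing_transpose: "pairing (transpose J) x y = pairing J y x"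
proof -
  have "pairing (transpose J) x y = (\<Sum>i\<in>UNIV. \<Sum>j\<in>UNIV. y $ j * J $ j $ i * x $ i)"
    unfolding pairing_def transpose_def by (simp add: mult_ac)
  also have "\<dots> = (\<Sum>j\<in>UNIV. \<Sum>i\<in>UNIV. y $ j * J $ j $ i * x $ i)" by (rule sum.swap)
  finally show ?thesis unfolding pairing_def .
qed

definition smat :: "'k::field \<Rightarrow> 'k^'n^'m \<Rightarrow> 'k^'n^'m" where
  "smat c J = (\<chi> i j. c * J$i$j)"

lemma pairing_smat: "pairing (smat c J) x y = c * pairing J x y"
  unfolding pairing_def smat_def by (simp add: sum_distrib_left mult_ac)

lemma pairing_col: "pairing J x y = (\<Sum>j\<in>UNIV. (\<Sum>i\<in>UNIV. x$i * J$i$j) * y$j)"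
  unfolding pairing_def sum_distrib_right by (rule sum.swap)

lemma nondeg_alt: "nondegenerate J \<longleftrightarrow> (\<forall>x. (\<forall>j. (\<Sum>i\<in>UNIV. x$i * J$i$j) = 0) \<longrightarrow> x = 0)"
proof
  assume n: "nondegenerate J"
  show "\<forall>x. (\<forall>j. (\<Sum>i\<in>UNIV. x$i * J$i$j) = 0) \<longrightarrow> x = 0"
    using n unfolding nondegenerate_def pairing_col by simp
next
  assume a: "\<forall>x. (\<forall>j. (\<Sum>i\<in>UNIV. x$i * J$i$j) = 0) \<longrightarrow> x = 0"
  show "nondegenerate J" unfolding nondegenerate_def
  proof (intro allI impI)
    fix x assume h: "\<forall>y. pairing J x y = 0"
    have "(\<Sum>i\<in>UNIV. x$i * J$i$j) = 0" for j
      using h[rule_format, of "axis j 1"] unfolding pairing_col by (simp add: axis_def)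
    then show "x = 0" using a by blast
  qed
qed

lemma nondeg_det: "nondegenerate J \<Longrightarrow> det J \<noteq> 0"
proof -
  assume n: "nondegenerate J"
  have "\<forall>x. transpose J *v x = 0 \<longrightarrow> x = 0"
  proof (intro allI impI)
    fix x assume "transpose J *v x = 0"
    then have "\<forall>j. (\<Sum>i\<in>UNIV. x$i * J$i$j) = 0"
      by (auto simp: vec_eq_iff matrix_vector_mult_def transpose_def mult_ac)
    then show "x = 0" using n nondeg_alt by blast
  qed
  then have "invertible (transpose J)"
    using matrix_left_invertible_ker invertible_left_inverse by blast
  then show ?thesis using invertible_det_nz det_transpose by metis
qed

lemma det_zero_kernel:
  fixes J :: "'k::field^'n^'n"
  assumes "det J = 0" shows "\<exists>y. y \<noteq> 0 \<and> (\<forall>x. pairing J x y = 0)"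
proof -
  have "\<not> invertible J" using assms invertible_det_nz by blast
  then obtain y where "J *v y = 0" "y \<noteq> 0"
    using matrix_left_invertible_ker invertible_left_inverse by blast
  then show ?thesis by (auto simp: pairing_dot dotk_def)
qed



lemma coeff_prod_linear:
  fixes a b :: "'i \<Rightarrow> 'k::comm_ring_1"
  assumes "finite S"
  shows "degree (\<Prod>i\<in>S. [:a i, b i:]) \<le> card S \<and> coeff (\<Prod>i\<in>S. [:a i, b i:]) (card S) = (\<Prod>i\<in>S. b i)"
  using assms
proof (induction S rule: finite_induct)
  case empty
  then show ?case by simp
next
  case (insert x F)
  let ?p = "\<Prod>i\<in>F. [:a i, b i:]"
  have e: "(\<Prod>i\<in>insert x F. [:a i, b i:]) = [:a x, b x:] * ?p" using insert by simp
  have d: "degree ([:a x, b x:] * ?p) \<le> Suc (card F)"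
  proof -
    have "degree [:a x, b x:] \<le> 1" by (rule order.trans[OF degree_pCons_le]) simp
    then show ?thesis using degree_mult_le[of "[:a x, b x:]" ?p] insert.IH by linarith
  qed
  have c: "coeff ([:a x, b x:] * ?p) (Suc (card F)) = b x * coeff ?p (card F)"
  proof -
    have "coeff ?p (Suc (card F)) = 0" using insert.IH by (simp add: coeff_eq_0)
    then show ?thesis by (simp add: mult_pCons_left)
  qed
  show ?case using e d c insert by simp
qed

lemma det_pencil_root:
  fixes J J' :: "'k::alg_closed_field^'n^'n"
  assumes "det J \<noteq> 0"
  shows "\<exists>t. det (\<chi> i j. J'$i$j + t * J$i$j) = 0"
proof -
  let ?S = "{p. p permutes (UNIV::'n set)}"
  define P where "P = (\<Sum>p\<in>?S. smult (of_int (sign p)) (\<Prod>i\<in>UNIV. [:J'$i$p i, J$i$p i:]))"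
  have ev: "poly P t = det (\<chi> i j. J'$i$j + t * J$i$j)" for t
    unfolding P_def det_def by (simp add: poly_sum poly_prod mult_ac)
  have cp: "coeff (\<Prod>i\<in>UNIV. [:J'$i$p i, J$i$p i:]) CARD('n) = (\<Prod>i\<in>UNIV. J$i$p i)" for p
    by (rule conjunct2[OF coeff_prod_linear[OF finite_class.finite_UNIV]])
  have co: "coeff P CARD('n) = det J"
    unfolding P_def det_def using cp by (simp add: coeff_sum)
  have "degree P \<ge> CARD('n)" using co assms le_degree by metis
  then have "degree P > 0" using zero_less_card_finite[where 'a='n] by linarith
  then obtain t where "poly P t = 0" using alg_closed_imp_poly_has_root by blast
  then show ?thesis using ev by metis
qed

lemma pairing_add_right: "pairing K x (y + z) = pairing K x y + pairing K x z"
  unfolding pairing_def by (simp add: algebra_simps sum.distrib)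

lemma pairing_scale_right: "pairing K x (a *s y) = a * pairing K x y"
  unfolding pairing_def by (simp add: sum_distrib_left mult_ac)

lemma pairing_zero_right: "pairing K x 0 = 0"
  unfolding pairing_def by simp

lemma CM_group: "CM_setting G H cc \<Longrightarrow> group G"
  unfolding CM_setting_def by (elim conjE) assumption

lemma CM_subgroup: "CM_setting G H cc \<Longrightarrow> subgroup H G"
  unfolding CM_setting_def by (elim conjE) assumption

lemma CM_prod_all: "CM_setting G H cc \<Longrightarrow> \<forall>g\<in>carrier G - H. \<forall>h\<in>carrier G - H. g \<otimes>\<^bsub>G\<^esub> h \<in> H"
  unfolding CM_setting_def by (elim conjE) assumption

lemma CM_cc_all: "CM_setting G H cc \<Longrightarrow> \<forall>v. cc v \<in> carrier G - H \<and> cc v \<otimes>\<^bsub>G\<^esub> cc v = \<one>\<^bsub>G\<^esub>"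
  unfolding CM_setting_def by (elim conjE) assumption

lemma CM_prod: "CM_setting G H cc \<Longrightarrow> g \<in> carrier G \<Longrightarrow> g \<notin> H \<Longrightarrow> h \<in> carrier G \<Longrightarrow> h \<notin> H \<Longrightarrow> g \<otimes>\<^bsub>G\<^esub> h \<in> H"
  using CM_prod_all by (metis DiffI)

lemma CM_cc: "CM_setting G H cc \<Longrightarrow> cc v \<in> carrier G"  "CM_setting G H cc \<Longrightarrow> cc v \<notin> H"
  "CM_setting G H cc \<Longrightarrow> cc v \<otimes>\<^bsub>G\<^esub> cc v = \<one>\<^bsub>G\<^esub>"
  using CM_cc_all by (metis DiffD1, metis DiffD2, metis)

lemma conj_in_H:
  assumes S: "CM_setting G H cc" and g: "g \<in> H"
  shows "cc v \<otimes>\<^bsub>G\<^esub> g \<otimes>\<^bsub>G\<^esub> cc v \<in> H"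
proof -
  interpret G: group G using S CM_group by blast
  have sub: "subgroup H G" using S CM_subgroup by blast
  have c: "cc v \<in> carrier G" "cc v \<notin> H" using CM_cc[OF S] by auto
  have gc: "g \<in> carrier G" using g subgroup.subset[OF sub] by blast
  have cg: "cc v \<otimes>\<^bsub>G\<^esub> g \<in> carrier G" using c gc by simp
  have "cc v \<otimes>\<^bsub>G\<^esub> g \<notin> H"
  proof
    assume a: "cc v \<otimes>\<^bsub>G\<^esub> g \<in> H"
    have "cc v \<otimes>\<^bsub>G\<^esub> g \<otimes>\<^bsub>G\<^esub> inv\<^bsub>G\<^esub> g \<in> H"
      by (rule subgroup.m_closed[OF sub a subgroup.m_inv_closed[OF sub g]])
    moreover have "cc v \<otimes>\<^bsub>G\<^esub> g \<otimes>\<^bsub>G\<^esub> inv\<^bsub>G\<^esub> g = cc v"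
      using c gc by (simp add: G.m_assoc)
    ultimately show False using c by simp
  qed
  then show ?thesis using CM_prod[OF S cg _ c(1) c(2)] by blast
qed

lemma conj_conj:
  assumes S: "CM_setting G H cc" and h: "h \<in> carrier G"
  shows "cc v \<otimes>\<^bsub>G\<^esub> (cc v \<otimes>\<^bsub>G\<^esub> h \<otimes>\<^bsub>G\<^esub> cc v) \<otimes>\<^bsub>G\<^esub> cc v = h"
proof -
  interpret G: group G using S CM_group by blast
  have c: "cc v \<in> carrier G" "cc v \<otimes>\<^bsub>G\<^esub> cc v = \<one>\<^bsub>G\<^esub>" using CM_cc[OF S] by auto
  have "cc v \<otimes>\<^bsub>G\<^esub> (cc v \<otimes>\<^bsub>G\<^esub> h \<otimes>\<^bsub>G\<^esub> cc v) \<otimes>\<^bsub>G\<^esub> cc v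
      = (cc v \<otimes>\<^bsub>G\<^esub> cc v) \<otimes>\<^bsub>G\<^esub> h \<otimes>\<^bsub>G\<^esub> (cc v \<otimes>\<^bsub>G\<^esub> cc v)"
    by (simp only: G.m_assoc c(1) h G.m_closed)
  also have "\<dots> = h" by (simp only: c(2)) (simp add: h)
  finally show ?thesis .
qed

lemma self_neg_zero: "(a::'k::field_char_0) = - a \<Longrightarrow> a = 0"
proof -
  assume h: "a = - a"
  have s: "a + a = 0" by (simp only: neg_eq_iff_add_eq_0[symmetric]) (rule h[symmetric])
  have "(2::'k) * a = 0" by (simp only: mult_2 s)
  then show "a = 0" by simp
qed



lemma sign_unique:
  fixes r :: "'g \<Rightarrow> 'k::{alg_closed_field, field_char_0}^'n^'n"
  assumes S: "CM_setting G H cc" and irr: "irreducible_rep G H r"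
    and P1: "pol_pairing G H cc r \<mu> v (-1) J" and P2: "pol_pairing G H cc r \<mu> v 1 J'"
  shows False
proof -
  interpret G: group G using S CM_group by blast
  have sub: "subgroup H G" using S CM_subgroup by blast
  have rep: "is_rep G H r" using irr irreducible_rep_def by blast
  have nJ: "nondegenerate J" and aJ0: "\<forall>x y. pairing J x y = (-1) * pairing J y x"
    and eJ: "\<forall>g\<in>H. \<forall>x y. pairing J (r g *v x) (r (cc v \<otimes>\<^bsub>G\<^esub> g \<otimes>\<^bsub>G\<^esub> cc v) *v y) = \<mu> g * pairing J x y"
    using P1 unfolding pol_pairing_def by blast+
  have aJ: "pairing J x y = - pairing J y x" for x y using aJ0[rule_format, of x y] by simp
  have nJ': "nondegenerate J'" and sJ0: "\<forall>x y. pairing J' x y = 1 * pairing J' y x"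
    and eJ': "\<forall>g\<in>H. \<forall>x y. pairing J' (r g *v x) (r (cc v \<otimes>\<^bsub>G\<^esub> g \<otimes>\<^bsub>G\<^esub> cc v) *v y) = \<mu> g * pairing J' x y"
    using P2 unfolding pol_pairing_def by blast+
  have sJ': "pairing J' x y = pairing J' y x" for x y using sJ0[rule_format, of x y] by simp
  obtain t where dt: "det (\<chi> i j. J'$i$j + t * J$i$j) = 0"
    using det_pencil_root nondeg_det nJ by blast
  define K where "K = (\<chi> i j. J'$i$j + t * J$i$j)"
  have pK: "pairing K x y = pairing J' x y + t * pairing J x y" for x y
    unfolding K_def pairing_def by (simp add: algebra_simps sum.distrib sum_distrib_left)
  have dK: "det K = 0" using dt unfolding K_def .
  obtain y0 where y0: "y0 \<noteq> 0" "\<forall>x. pairing K x y0 = 0"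
    using det_zero_kernel[OF dK] by blast
  define W where "W = {y. \<forall>x. pairing K x y = 0}"
  have subW: "is_subspace W"
    unfolding is_subspace_def W_def by (auto simp add: pairing_add_right pairing_scale_right pairing_zero_right)
  have inv: "\<forall>h\<in>H. \<forall>y\<in>W. r h *v y \<in> W"
  proof (intro ballI)
    fix h y assume h: "h \<in> H" and y: "y \<in> W"
    define c where "c = cc v"
    define g where "g = c \<otimes>\<^bsub>G\<^esub> h \<otimes>\<^bsub>G\<^esub> c"
    have gH: "g \<in> H" using conj_in_H[OF S h] unfolding g_def c_def .
    have hc: "h \<in> carrier G" by (rule subsetD[OF subgroup.subset[OF sub] h])
    have gc: "g \<in> carrier G" by (rule subsetD[OF subgroup.subset[OF sub] gH])
    have hg: "c \<otimes>\<^bsub>G\<^esub> g \<otimes>\<^bsub>G\<^esub> c = h" using conj_conj[OF S hc] unfolding g_def c_def .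
    have ig: "inv\<^bsub>G\<^esub> g \<in> H" by (rule subgroup.m_inv_closed[OF sub gH])
    have rr: "r g ** r (inv\<^bsub>G\<^esub> g) = mat 1"
    proof -
      have "r g ** r (inv\<^bsub>G\<^esub> g) = r (g \<otimes>\<^bsub>G\<^esub> inv\<^bsub>G\<^esub> g)" using rep gH ig unfolding is_rep_def by simp
      also have "\<dots> = r \<one>\<^bsub>G\<^esub>" using gc by simp
      also have "\<dots> = mat 1" using rep unfolding is_rep_def by simp
      finally show ?thesis .
    qed
    show "r h *v y \<in> W" unfolding W_def
    proof (intro CollectI allI)
      fix x
      define x' where "x' = r (inv\<^bsub>G\<^esub> g) *v x"
      have xx: "x = r g *v x'" unfolding x'_def
        by (simp add: matrix_vector_mul_assoc rr)
      have "pairing K x (r h *v y) = pairing K (r g *v x') (r (c \<otimes>\<^bsub>G\<^esub> g \<otimes>\<^bsub>G\<^esub> c) *v y)"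
        using xx hg by simp
      also have "\<dots> = \<mu> g * pairing K x' y"
        using pK eJ eJ' gH unfolding c_def by (simp add: algebra_simps)
      also have "\<dots> = 0" using y unfolding W_def by simp
      finally show "pairing K x (r h *v y) = 0" .
    qed
  qed
  have "W = {0} \<or> W = UNIV" using irr subW inv unfolding irreducible_rep_def by blast
  moreover have "y0 \<in> W" using y0 unfolding W_def by blast
  ultimately have WU: "W = UNIV" using y0 by auto
  have z: "pairing J' x y = 0" for x y
  proof -
    have allK: "pairing K a b = 0" for a b using WU unfolding W_def by blast
    have 1: "pairing J' x y = - (t * pairing J x y)" using allK[of x y] pK[of x y]
      by (simp add: eq_neg_iff_add_eq_0)
    have 2: "pairing J' y x = - (t * pairing J y x)" using allK[of y x] pK[of y x]
      by (simp add: eq_neg_iff_add_eq_0)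
    have "pairing J' x y = pairing J' y x" by (rule sJ')
    also have "\<dots> = - (t * pairing J y x)" by (rule 2)
    also have "\<dots> = t * pairing J x y" by (simp add: aJ[of y x])
    also have "\<dots> = - pairing J' x y" using 1 by simp
    finally have "pairing J' x y = - pairing J' x y" .
    then show ?thesis by (rule self_neg_zero)
  qed
  then have "axis undefined 1 = (0::'k^'n)" using nJ' unfolding nondegenerate_def by blast
  then show False by simp
qed



definition kron :: "'k::field^'n^'n \<Rightarrow> 'k^'m^'m \<Rightarrow> 'k^('n\<times>'m)^('n\<times>'m)" where
  "kron A B = (\<chi> p q. A$fst p$fst q * B$snd p$snd q)"

lemma tensor_kron: "tensor_rep r s g = kron (r g) (s g)"
  unfolding tensor_rep_def kron_def ..

lemma sum_pair_UNIV: "(\<Sum>k\<in>(UNIV::('a::finite\<times>'b::finite) set). f k) = (\<Sum>i\<in>UNIV. \<Sum>j\<in>UNIV. f (i,j))"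
  by (simp add: sum.cartesian_product)

lemma kron_mult: "kron A B ** kron C D = kron (A ** C) (B ** D)"
proof -
  have "(kron A B ** kron C D)$p$q = (kron (A ** C) (B ** D))$p$q" for p q
  proof -
    have "(kron A B ** kron C D)$p$q
      = (\<Sum>i\<in>UNIV. \<Sum>j\<in>UNIV. (A$fst p$i * C$i$fst q) * (B$snd p$j * D$j$snd q))"
      unfolding kron_def matrix_matrix_mult_def by (simp add: sum_pair_UNIV mult_ac)
    also have "\<dots> = (\<Sum>i\<in>UNIV. A$fst p$i * C$i$fst q) * (\<Sum>j\<in>UNIV. B$snd p$j * D$j$snd q)"
      by (simp add: sum_product)
    also have "\<dots> = (kron (A ** C) (B ** D))$p$q"
      unfolding kron_def matrix_matrix_mult_def by simp
    finally show ?thesis .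
  qed
  then show ?thesis by (simp add: vec_eq_iff)
qed

lemma kron_transpose: "transpose (kron A B) = kron (transpose A) (transpose B)"
  by (simp add: kron_def transpose_def vec_eq_iff)

lemma kron_smat: "kron (smat a A) (smat b B) = smat (a*b) (kron A B)"
  by (simp add: kron_def smat_def vec_eq_iff mult_ac)

lemma equiv_mat:
  assumes "\<forall>x y. pairing J (A *v x) (B *v y) = c * pairing J x y"
  shows "transpose A ** J ** B = smat c J"
  by (rule pairing_eqI) (simp add: pairing_mat[symmetric] pairing_smat assms)

lemma sym_mat:
  assumes "\<forall>x y. pairing J x y = e * pairing J y x"
  shows "transpose J = smat e J"
proof (rule pairing_eqI)
  fix x y
  have "pairing (transpose J) x y = pairing J y x" by (rule pairing_transpose)
  also have "\<dots> = e * pairing J x y" using assms by blast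
  also have "\<dots> = pairing (smat e J) x y" by (simp add: pairing_smat)
  finally show "pairing (transpose J) x y = pairing (smat e J) x y" .
qed

lemma kron_nondeg:
  fixes J1 :: "'k::field^'n^'n" and J2 :: "'k^'m^'m"
  assumes n1: "nondegenerate J1" and n2: "nondegenerate J2"
  shows "nondegenerate (kron J1 J2)"
  unfolding nondeg_alt
proof (intro allI impI)
  fix x :: "'k^('n\<times>'m)"
  assume h: "\<forall>j. (\<Sum>i\<in>UNIV. x$i * kron J1 J2$i$j) = 0"
  have e: "(\<Sum>k\<in>UNIV. (\<Sum>i\<in>UNIV. x$(i,k) * J1$i$a) * J2$k$b) = 0" for a b
  proof -
    have "(\<Sum>k\<in>UNIV. (\<Sum>i\<in>UNIV. x$(i,k) * J1$i$a) * J2$k$b)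
        = (\<Sum>k\<in>UNIV. \<Sum>i\<in>UNIV. x$(i,k) * J1$i$a * J2$k$b)"
      by (simp add: sum_distrib_right)
    also have "\<dots> = (\<Sum>i\<in>UNIV. \<Sum>k\<in>UNIV. x$(i,k) * J1$i$a * J2$k$b)"
      by (rule sum.swap)
    also have "\<dots> = (\<Sum>p\<in>UNIV. x$p * kron J1 J2$p$(a,b))"
      unfolding sum_pair_UNIV kron_def by (simp add: mult_ac)
    also have "\<dots> = 0" using h by blast
    finally show ?thesis .
  qed
  have z: "(\<Sum>i\<in>UNIV. x$(i,k) * J1$i$a) = 0" for k a
  proof -
    have "(\<chi> k. (\<Sum>i\<in>UNIV. x$(i,k) * J1$i$a)) = 0"
      using n2 e unfolding nondeg_alt by simp
    then show ?thesis by (simp add: vec_eq_iff)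
  qed
  have "(\<chi> i. x$(i,k)) = 0" for k
    using n1 z unfolding nondeg_alt by simp
  then show "x = 0" by (simp add: vec_eq_iff)
qed

lemma tensor_pol_pairing:
  fixes r :: "'g \<Rightarrow> 'k::field^'n^'n" and s :: "'g \<Rightarrow> 'k^'m^'m"
  assumes P1: "pol_pairing G H cc r \<mu> v e1 J1" and P2: "pol_pairing G H cc s \<psi> v e2 J2"
  shows "pol_pairing G H cc (tensor_rep r s) (\<lambda>g. \<mu> g * \<psi> g * quad_char H g) v (e1*e2) (kron J1 J2)"
proof -
  have n1: "nondegenerate J1" and s1: "\<forall>x y. pairing J1 x y = e1 * pairing J1 y x"
    and q1: "\<forall>g\<in>H. \<forall>x y. pairing J1 (r g *v x) (r (cc v \<otimes>\<^bsub>G\<^esub> g \<otimes>\<^bsub>G\<^esub> cc v) *v y) = \<mu> g * pairing J1 x y"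
    using P1 unfolding pol_pairing_def by blast+
  have n2: "nondegenerate J2" and s2: "\<forall>x y. pairing J2 x y = e2 * pairing J2 y x"
    and q2: "\<forall>g\<in>H. \<forall>x y. pairing J2 (s g *v x) (s (cc v \<otimes>\<^bsub>G\<^esub> g \<otimes>\<^bsub>G\<^esub> cc v) *v y) = \<psi> g * pairing J2 x y"
    using P2 unfolding pol_pairing_def by blast+
  have T1: "transpose J1 = smat e1 J1" by (rule sym_mat[OF s1])
  have T2: "transpose J2 = smat e2 J2" by (rule sym_mat[OF s2])
  have sym: "pairing (kron J1 J2) x y = e1 * e2 * pairing (kron J1 J2) y x" for x y
  proof -
    have "pairing (kron J1 J2) x y = pairing (transpose (kron J1 J2)) y x"
      by (simp add: pairing_transpose)
    also have "transpose (kron J1 J2) = smat (e1*e2) (kron J1 J2)"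
      by (simp add: kron_transpose T1 T2 kron_smat)
    finally show ?thesis by (simp add: pairing_smat)
  qed
  have eq: "pairing (kron J1 J2) (tensor_rep r s g *v x) (tensor_rep r s (cc v \<otimes>\<^bsub>G\<^esub> g \<otimes>\<^bsub>G\<^esub> cc v) *v y)
      = \<mu> g * \<psi> g * quad_char H g * pairing (kron J1 J2) x y" if g: "g \<in> H" for g x y
  proof -
    let ?g' = "cc v \<otimes>\<^bsub>G\<^esub> g \<otimes>\<^bsub>G\<^esub> cc v"
    have M1: "transpose (r g) ** J1 ** r ?g' = smat (\<mu> g) J1" by (rule equiv_mat) (use q1 g in blast)
    have M2: "transpose (s g) ** J2 ** s ?g' = smat (\<psi> g) J2" by (rule equiv_mat) (use q2 g in blast)
    have "pairing (kron J1 J2) (tensor_rep r s g *v x) (tensor_rep r s ?g' *v y)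
        = pairing (transpose (kron (r g) (s g)) ** kron J1 J2 ** kron (r ?g') (s ?g')) x y"
      by (simp add: tensor_kron pairing_mat)
    also have "transpose (kron (r g) (s g)) ** kron J1 J2 ** kron (r ?g') (s ?g')
        = kron (transpose (r g) ** J1 ** r ?g') (transpose (s g) ** J2 ** s ?g')"
      by (simp add: kron_transpose kron_mult)
    also have "\<dots> = smat (\<mu> g * \<psi> g) (kron J1 J2)" by (simp add: M1 M2 kron_smat)
    finally show ?thesis using g by (simp add: pairing_smat quad_char_def)
  qed
  show ?thesis unfolding pol_pairing_def
    using kron_nondeg[OF n1 n2] sym eq by blast
qed

lemma odd_antisym:
  fixes J :: "'k::field_char_0^'n^'n"
  assumes n: "nondegenerate J" and a: "\<forall>x y. pairing J x y = (-1) * pairing J y x"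
    and o: "odd CARD('n)"
  shows False
proof -
  have T: "transpose J = smat (-1) J" by (rule sym_mat[OF a])
  have "smat (-1) J = (\<chi> i. (\<lambda>_. -1) i *s J$i)"
    by (simp add: smat_def vec_eq_iff)
  then have "det (smat (-1) J) = (\<Prod>i\<in>(UNIV::'n set). (-1::'k)) * det (\<chi> i. J$i)"
    using det_rows_mul[of "\<lambda>_. -1" "\<lambda>i. J$i"] by simp
  also have "\<dots> = - det J" using o by simp
  finally have "det J = - det J" using T det_transpose[of J] by simp
  then have "det J = 0" by (rule self_neg_zero)
  then show False using nondeg_det[OF n] by simp
qed



lemma pol_pm:
  assumes "polarized G H cc r \<mu>"
  shows "\<mu> (cc v) = 1 \<or> \<mu> (cc v) = -1"
proof -
  obtain e J where "e = 1 \<or> e = -1" "e = - \<mu> (cc v)"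
    using assms unfolding polarized_def by blast
  then show ?thesis by (metis minus_minus)
qed

lemma odd_iff:
  fixes r :: "'g \<Rightarrow> 'k::{alg_closed_field, field_char_0}^'n^'n"
  assumes S: "CM_setting G H cc" and irr: "irreducible_rep G H r" and P: "polarized G H cc r \<mu>"
  shows "totally_odd G H cc r \<mu> \<longleftrightarrow> (\<forall>v. \<mu> (cc v) = -1)"
proof
  assume T: "totally_odd G H cc r \<mu>"
  show "\<forall>v. \<mu> (cc v) = -1"
  proof
    fix v
    obtain e J where e: "e = 1 \<or> e = -1" and PJ: "pol_pairing G H cc r \<mu> v e J" and ee: "e = - \<mu> (cc v)"
      using P unfolding polarized_def by blast
    obtain J' where PJ': "pol_pairing G H cc r \<mu> v 1 J'"
      using T unfolding totally_odd_def by blast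
    have "e \<noteq> -1"
    proof
      assume "e = -1"
      then show False using sign_unique[OF S irr _ PJ'] PJ by blast
    qed
    then have "e = 1" using e by blast
    then show "\<mu> (cc v) = -1" using ee by (metis minus_minus)
  qed
next
  assume A: "\<forall>v. \<mu> (cc v) = -1"
  show "totally_odd G H cc r \<mu>"
    unfolding totally_odd_def
  proof (intro conjI allI)
    show "polarized G H cc r \<mu>" by (rule P)
    fix v
    obtain e J where PJ: "pol_pairing G H cc r \<mu> v e J" and ee: "e = - \<mu> (cc v)"
      using P unfolding polarized_def by blast
    have "e = 1" using ee A by simp
    then show "\<exists>J. pol_pairing G H cc r \<mu> v 1 J" using PJ by blast
  qed
qed

lemma quad_char_character:
  assumes S: "CM_setting G H cc"
  shows "is_character G (quad_char H :: 'g \<Rightarrow> 'k::field)"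
proof -
  interpret G: group G using S CM_group by blast
  have sub: "subgroup H G" using S CM_subgroup by blast
  have mul: "quad_char H (g \<otimes>\<^bsub>G\<^esub> h) = (quad_char H g * quad_char H h :: 'k)"
    if g: "g \<in> carrier G" and h: "h \<in> carrier G" for g h
  proof (cases "g \<in> H")
    case True
    note gH = True
    show ?thesis
    proof (cases "h \<in> H")
      case True
      then have "g \<otimes>\<^bsub>G\<^esub> h \<in> H" by (rule subgroup.m_closed[OF sub gH])
      then show ?thesis using gH True by (simp add: quad_char_def)
    next
      case False
      have "g \<otimes>\<^bsub>G\<^esub> h \<notin> H"
      proof
        assume a: "g \<otimes>\<^bsub>G\<^esub> h \<in> H"
        have "inv\<^bsub>G\<^esub> g \<otimes>\<^bsub>G\<^esub> (g \<otimes>\<^bsub>G\<^esub> h) \<in> H"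
          by (rule subgroup.m_closed[OF sub subgroup.m_inv_closed[OF sub gH] a])
        moreover have "inv\<^bsub>G\<^esub> g \<otimes>\<^bsub>G\<^esub> (g \<otimes>\<^bsub>G\<^esub> h) = h"
          using g h by (simp add: G.m_assoc[symmetric])
        ultimately show False using False by simp
      qed
      then show ?thesis using gH False by (simp add: quad_char_def)
    qed
  next
    case False
    note gN = False
    show ?thesis
    proof (cases "h \<in> H")
      case True
      have "g \<otimes>\<^bsub>G\<^esub> h \<notin> H"
      proof
        assume a: "g \<otimes>\<^bsub>G\<^esub> h \<in> H"
        have "(g \<otimes>\<^bsub>G\<^esub> h) \<otimes>\<^bsub>G\<^esub> inv\<^bsub>G\<^esub> h \<in> H"
          by (rule subgroup.m_closed[OF sub a subgroup.m_inv_closed[OF sub True]])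
        moreover have "(g \<otimes>\<^bsub>G\<^esub> h) \<otimes>\<^bsub>G\<^esub> inv\<^bsub>G\<^esub> h = g"
          using g h by (simp add: G.m_assoc)
        ultimately show False using gN by simp
      qed
      then show ?thesis using gN True by (simp add: quad_char_def)
    next
      case False
      have "g \<otimes>\<^bsub>G\<^esub> h \<in> H" by (rule CM_prod[OF S g gN h False])
      then show ?thesis using gN False by (simp add: quad_char_def)
    qed
  qed
  have "\<one>\<^bsub>G\<^esub> \<in> H" by (rule subgroup.one_closed[OF sub])
  then show ?thesis unfolding is_character_def using mul by (simp add: quad_char_def)
qed

lemma char_mult3:
  assumes "is_character G (a::'g \<Rightarrow> 'k::field)" "is_character G b" "is_character G c"
  shows "is_character G (\<lambda>g. a g * b g * c g)"
  using assms unfolding is_character_def by (simp add: mult_ac)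

lemma tensor_polarized:
  fixes \<rho> :: "'g \<Rightarrow> 'k::field_char_0^'n^'n" and \<sigma> :: "'g \<Rightarrow> 'k^'m^'m"
  assumes S: "CM_setting G H cc" and rep: "is_rep G H (tensor_rep \<rho> \<sigma>)"
    and P1: "polarized G H cc \<rho> \<mu>" and P2: "polarized G H cc \<sigma> \<psi>"
  shows "polarized G H cc (tensor_rep \<rho> \<sigma>) (\<lambda>g. \<mu> g * \<psi> g * quad_char H g)"
  unfolding polarized_def
proof (intro conjI allI)
  show "is_rep G H (tensor_rep \<rho> \<sigma>)" by (rule rep)
  show "is_character G (\<lambda>g. \<mu> g * \<psi> g * quad_char H g)"
    using char_mult3 P1 P2 quad_char_character[OF S] unfolding polarized_def by blast
  fix v
  obtain e1 J1 where e1: "e1 = 1 \<or> e1 = -1" and PJ1: "pol_pairing G H cc \<rho> \<mu> v e1 J1" and ee1: "e1 = - \<mu> (cc v)"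
    using P1 unfolding polarized_def by blast
  obtain e2 J2 where e2: "e2 = 1 \<or> e2 = -1" and PJ2: "pol_pairing G H cc \<sigma> \<psi> v e2 J2" and ee2: "e2 = - \<psi> (cc v)"
    using P2 unfolding polarized_def by blast
  have q: "quad_char H (cc v) = (-1::'k)" using CM_cc(2)[OF S] by (simp add: quad_char_def)
  have m: "\<mu> (cc v) = - e1" using ee1 by simp
  have p: "\<psi> (cc v) = - e2" using ee2 by simp
  have s1: "e1 * e2 = 1 \<or> e1 * e2 = -1" using e1 e2 by auto
  have s2: "e1 * e2 = - (\<mu> (cc v) * \<psi> (cc v) * quad_char H (cc v))" by (simp add: m p q)
  have "(e1 * e2 = 1 \<or> e1 * e2 = -1) \<and> pol_pairing G H cc (tensor_rep \<rho> \<sigma>) (\<lambda>g. \<mu> g * \<psi> g * quad_char H g) v (e1*e2) (kron J1 J2)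
     \<and> e1 * e2 = - (\<mu> (cc v) * \<psi> (cc v) * quad_char H (cc v))"
    using s1 s2 tensor_pol_pairing[OF PJ1 PJ2] by blast
  then show "\<exists>e J. (e = 1 \<or> e = -1) \<and> pol_pairing G H cc (tensor_rep \<rho> \<sigma>) (\<lambda>g. \<mu> g * \<psi> g * quad_char H g) v e J
     \<and> e = - (\<mu> (cc v) * \<psi> (cc v) * quad_char H (cc v))" by blast
qed

theorem lemma2p9:
  fixes G :: "('g, 'b) monoid_scheme" and H :: "'g set" and cc :: "'v \<Rightarrow> 'g"
    and \<rho> :: "'g \<Rightarrow> 'k::{alg_closed_field, field_char_0} ^'n^'n"
    and \<sigma> :: "'g \<Rightarrow> 'k ^'m^'m"
    and \<mu> \<psi> :: "'g \<Rightarrow> 'k"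
  assumes setting: "CM_setting G H cc"
    and rho_irr: "irreducible_rep G H \<rho>" and rho_pol: "polarized G H cc \<rho> \<mu>"
    and sigma_irr: "irreducible_rep G H \<sigma>" and sigma_pol: "polarized G H cc \<sigma> \<psi>"
  shows "(odd CARD('n) \<longrightarrow> totally_odd G H cc \<rho> \<mu>)
    \<and> (irreducible_rep G H (tensor_rep \<rho> \<sigma>) \<longrightarrow>
        (let A = totally_odd G H cc \<rho> \<mu>;
             B = totally_odd G H cc \<sigma> \<psi>;
             C = totally_odd G H cc (tensor_rep \<rho> \<sigma>) (\<lambda>g. \<mu> g * \<psi> g * quad_char H g)
         in ((A \<and> B) \<or> (A \<and> C) \<or> (B \<and> C)) \<longrightarrow> A \<and> B \<and> C))"
proof (intro conjI impI)
  assume o: "odd CARD('n)"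
  show "totally_odd G H cc \<rho> \<mu>"
    unfolding totally_odd_def
  proof (intro conjI allI)
    show "polarized G H cc \<rho> \<mu>" by (rule rho_pol)
    fix v
    obtain e J where e: "e = 1 \<or> e = -1" and PJ: "pol_pairing G H cc \<rho> \<mu> v e J"
      using rho_pol unfolding polarized_def by blast
    have "e \<noteq> -1"
    proof
      assume em: "e = -1"
      have n: "nondegenerate J" and a: "\<forall>x y. pairing J x y = e * pairing J y x"
        using PJ unfolding pol_pairing_def by blast+
      show False using odd_antisym[OF n _ o] a em by blast
    qed
    then have "e = 1" using e by blast
    then show "\<exists>J. pol_pairing G H cc \<rho> \<mu> v 1 J" using PJ by blast
  qed
next
  assume TI: "irreducible_rep G H (tensor_rep \<rho> \<sigma>)"
  have TP: "polarized G H cc (tensor_rep \<rho> \<sigma>) (\<lambda>g. \<mu> g * \<psi> g * quad_char H g)"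
    using tensor_polarized[OF setting _ rho_pol sigma_pol] TI unfolding irreducible_rep_def by blast
  have A: "totally_odd G H cc \<rho> \<mu> \<longleftrightarrow> (\<forall>v. \<mu> (cc v) = -1)"
    by (rule odd_iff[OF setting rho_irr rho_pol])
  have B: "totally_odd G H cc \<sigma> \<psi> \<longleftrightarrow> (\<forall>v. \<psi> (cc v) = -1)"
    by (rule odd_iff[OF setting sigma_irr sigma_pol])
  have q: "quad_char H (cc v) = (-1::'k)" for v using CM_cc(2)[OF setting] by (simp add: quad_char_def)
  have C: "totally_odd G H cc (tensor_rep \<rho> \<sigma>) (\<lambda>g. \<mu> g * \<psi> g * quad_char H g) \<longleftrightarrow> (\<forall>v. \<mu> (cc v) * \<psi> (cc v) = 1)"
    using odd_iff[OF setting TI TP] q by (simp add: minus_equation_iff)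
  have pm1: "\<mu> (cc v) = 1 \<or> \<mu> (cc v) = -1" for v by (rule pol_pm[OF rho_pol])
  have pm2: "\<psi> (cc v) = 1 \<or> \<psi> (cc v) = -1" for v by (rule pol_pm[OF sigma_pol])
  have key: "((\<forall>v. \<mu> (cc v) = -1) \<and> (\<forall>v. \<psi> (cc v) = -1)) \<or> ((\<forall>v. \<mu> (cc v) = -1) \<and> (\<forall>v. \<mu> (cc v) * \<psi> (cc v) = 1))
      \<or> ((\<forall>v. \<psi> (cc v) = -1) \<and> (\<forall>v. \<mu> (cc v) * \<psi> (cc v) = 1))
      \<Longrightarrow> (\<forall>v. \<mu> (cc v) = -1) \<and> (\<forall>v. \<psi> (cc v) = -1) \<and> (\<forall>v. \<mu> (cc v) * \<psi> (cc v) = 1)"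
  proof -
    assume h: "((\<forall>v. \<mu> (cc v) = -1) \<and> (\<forall>v. \<psi> (cc v) = -1)) \<or> ((\<forall>v. \<mu> (cc v) = -1) \<and> (\<forall>v. \<mu> (cc v) * \<psi> (cc v) = 1))
      \<or> ((\<forall>v. \<psi> (cc v) = -1) \<and> (\<forall>v. \<mu> (cc v) * \<psi> (cc v) = 1))"
    have "\<mu> (cc v) = -1 \<and> \<psi> (cc v) = -1 \<and> \<mu> (cc v) * \<psi> (cc v) = 1" for v
    proof -
      have "(\<mu> (cc v) = -1 \<and> \<psi> (cc v) = -1) \<or> (\<mu> (cc v) = -1 \<and> \<mu> (cc v) * \<psi> (cc v) = 1)
        \<or> (\<psi> (cc v) = -1 \<and> \<mu> (cc v) * \<psi> (cc v) = 1)" using h by blast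
      then show ?thesis using pm1[of v] pm2[of v] by auto
    qed
    then show ?thesis by blast
  qed
  show "let A = totally_odd G H cc \<rho> \<mu>;
             B = totally_odd G H cc \<sigma> \<psi>;
             C = totally_odd G H cc (tensor_rep \<rho> \<sigma>) (\<lambda>g. \<mu> g * \<psi> g * quad_char H g)
         in ((A \<and> B) \<or> (A \<and> C) \<or> (B \<and> C)) \<longrightarrow> A \<and> B \<and> C"
    unfolding Let_def A B C using key by blast
qed


end
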